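(* Let $p,q$ be distinct odd primes with $p\equiv 1\pmod 4$, $q\equiv 3\pmod 4$ and $\gcd(p-1,q-1)=2$, having a common primitive root $g$. With the Gauss periods $\eta_0,\eta_1,\delta_0^{p},\delta_1^{p},\delta_0^{q},\delta_1^{q}$ defined in the context, $$\eta_0^{2}\left(\delta_1^{p}\delta_1^{q}+\delta_0^{p}\delta_0^{q}\right)+\eta_1^{2}\left(\delta_1^{p}\delta_0^{q}+\delta_0^{p}\delta_1^{q}\right)=\frac{1-pq}{4}+\epsilon\,\frac{pq}{2}$$ for some sign $\epsilon\in\{1,-1\}$.
   Context: Let $N=pq$ and $e=(p-1)(q-1)/2$. Let $x$ be the unique element of $\mathbb{Z}_N$ with $x\equiv g\pmod p$ and $x\equiv 1\pmod q$. The Whiteman generalized cyclotomic classes of order 2 are $D_i=\{g^{s}x^{i}\bmod N: s=0,1,\dots,e-1\}$ for $i=0,1$; they partition the unit group $\mathbb{Z}_N^{*}$. For a prime $r\in\{p,q\}$, the classical cyclotomic classes are $D_0^{(r)}=\{g^{2t}\bmod r: 0\le t\le \frac{r-1}{2}-1\}$ and $D_1^{(r)}=\{g^{2t+1}\bmod r: 0\le t\le \frac{r-1}{2}-1\}$. Let $\omega_r=e^{2\pi i/r}$ and $\omega_N=e^{2\pi i/N}$. The Gauss periods are $\delta_j^{r}=\sum_{k\in D_j^{(r)}}\omega_r^{k}$ for $r\in\{p,q\}$, $j=0,1$, and $\eta_j=\sum_{k\in D_j}\omega_N^{k}$ for $j=0,1$. *)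

theory Defs
  imports "HOL-Analysis.Analysis" "HOL-Number_Theory.Number_Theory"
begin

text \<open>Whiteman generalized cyclotomy of order 2 for N = p q.\<close>

definition wh_e :: "nat \<Rightarrow> nat \<Rightarrow> nat" where
  "wh_e p q = (p - 1) * (q - 1) div 2"

definition wh_x :: "nat \<Rightarrow> nat \<Rightarrow> nat \<Rightarrow> nat" where
  "wh_x p q g = (THE x. x < p * q \<and> [x = g] (mod p) \<and> [x = 1] (mod q))"

definition wh_D :: "nat \<Rightarrow> nat \<Rightarrow> nat \<Rightarrow> nat \<Rightarrow> nat set" where
  "wh_D p q g i = {(g ^ s * wh_x p q g ^ i) mod (p * q) | s. s < wh_e p q}"

definition cyc_D :: "nat \<Rightarrow> nat \<Rightarrow> nat \<Rightarrow> nat set" where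
  "cyc_D r g j = {g ^ (2 * t + j) mod r | t. t < (r - 1) div 2}"

definition unit_root :: "nat \<Rightarrow> nat \<Rightarrow> complex" where
  "unit_root n k = exp (2 * of_real pi * \<i> * of_nat k / of_nat n)"

definition gauss_delta :: "nat \<Rightarrow> nat \<Rightarrow> nat \<Rightarrow> complex" where
  "gauss_delta r g j = (\<Sum>k\<in>cyc_D r g j. unit_root r k)"

definition gauss_eta :: "nat \<Rightarrow> nat \<Rightarrow> nat \<Rightarrow> nat \<Rightarrow> complex" where
  "gauss_eta p q g j = (\<Sum>k\<in>wh_D p q g j. unit_root (p * q) k)"

end

theory Submission
  imports Defs
begin


lemma ur_add: "unit_root n (a + b) = unit_root n a * unit_root n b"
  unfolding unit_root_def by (simp add: exp_add[symmetric] add_divide_distrib distrib_left distrib_right)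

lemma ur_mult_mod: assumes "n > 0" shows "unit_root n (n * m) = 1"
proof -
  have "unit_root n (n*m) = exp ((2 * of_nat m * pi) * \<i>)"
    unfolding unit_root_def using assms by (simp add: field_simps)
  also have "\<dots> = 1" by (rule exp_integer_2pi) simp
  finally show ?thesis .
qed

lemma ur_mod: assumes "n > 0" shows "unit_root n (k mod n) = unit_root n k"
proof -
  have "unit_root n k = unit_root n (k mod n + n * (k div n))" by simp
  also have "\<dots> = unit_root n (k mod n) * unit_root n (n * (k div n))" by (rule ur_add)
  also have "\<dots> = unit_root n (k mod n)" using ur_mult_mod[OF assms] by simp
  finally show ?thesis by simp
qed

lemma ur_scale: assumes "m > 0" shows "unit_root (m * n) (m * k) = unit_root n k"
  unfolding unit_root_def using assms by (simp add: field_simps)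

lemma ur_pow: "unit_root n (a * m) = unit_root n m ^ a"
  unfolding unit_root_def by (simp add: exp_of_nat_mult[symmetric] field_simps)

lemma ur_eq_1: assumes "n > 0" "unit_root n m = 1" shows "n dvd m"
proof -
  from assms(2) obtain j :: int where j: "Im (2 * of_real pi * \<i> * of_nat m / of_nat n) = of_int (2 * j) * pi"
    unfolding unit_root_def exp_eq_1 by blast
  have "Im (2 * of_real pi * \<i> * of_nat m / of_nat n) = 2 * pi * m / n"
    by (simp add: Im_divide_of_nat)
  with j have "2 * pi * m / n = 2 * j * pi" by simp
  hence "real m = real n * j" using assms(1) pi_gt_zero by (simp add: field_simps)
  hence "int m = int n * j" by (metis of_int_eq_iff of_int_mult of_int_of_nat_eq)
  thus ?thesis by (metis dvd_triv_left int_dvd_int_iff)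
qed

lemma ur_sum: assumes "n > 0"
  shows "(\<Sum>a<n. unit_root n (a * m)) = (if n dvd m then of_nat n else 0)"
proof (cases "n dvd m")
  case True
  then obtain c where "m = n * c" by blast
  then have "unit_root n (a*m) = 1" for a using ur_mult_mod[OF assms, of "a*c"] by (simp add: ac_simps)
  then show ?thesis using True by simp
next
  case False
  let ?z = "unit_root n m"
  have z1: "?z \<noteq> 1" using ur_eq_1[OF assms] False by blast
  have "?z ^ n = 1" using ur_pow[of n n m] ur_mult_mod[OF assms, of m] by simp
  then show ?thesis using False z1 by (simp add: ur_pow sum_gp_strict)
qed


definition chi :: "nat \<Rightarrow> nat \<Rightarrow> int" where
  "chi r a = Legendre (int a) (int r)"

lemma Legendre_cong_eq: "[a = b] (mod p) \<Longrightarrow> Legendre a p = Legendre b p"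
proof -
  assume h: "[a = b] (mod p)"
  have 1: "[a = 0] (mod p) \<longleftrightarrow> [b = 0] (mod p)" using h by (meson cong_sym cong_trans)
  have 2: "QuadRes p a \<longleftrightarrow> QuadRes p b" using h unfolding QuadRes_def by (meson cong_sym cong_trans)
  show ?thesis by (simp add: Legendre_def 1 2)
qed

lemma chi_mod: "chi r (a mod r) = chi r a"
  unfolding chi_def by (rule Legendre_cong_eq) (simp add: cong_def zmod_int)

lemma chi_cong: "[a = b] (mod r) \<Longrightarrow> chi r a = chi r b"
proof -
  assume "[a = b] (mod r)"
  hence "a mod r = b mod r" by (simp add: cong_def)
  thus ?thesis using chi_mod[of r a] chi_mod[of r b] by simp
qed

lemma chi_vals: "chi r a \<in> {-1, 0, 1}"
  unfolding chi_def Legendre_def by auto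

lemma chi_0_iff: "chi r a = 0 \<longleftrightarrow> r dvd a"
  unfolding chi_def Legendre_def by (auto simp: cong_0_iff)

lemma chi_sq: "(chi r a)^2 = (if r dvd a then 0 else 1)"
  using chi_vals[of r a] chi_0_iff[of r a] by (auto simp: power2_eq_square)

lemma small_cong_eq:
  fixes x y :: int and r :: nat
  assumes "x \<in> {-1,0,1}" "y \<in> {-1,0,1}" "r > 2" "[x = y] (mod int r)"
  shows "x = y"
proof -
  have "int r dvd (x - y)" using assms(4) by (simp add: cong_iff_dvd_diff)
  then obtain k where k: "x - y = int r * k" by (elim dvdE)
  have lt: "\<bar>x - y\<bar> < int r" using assms(1-3) by auto
  have "k = 0"
  proof (rule ccontr)
    assume "k \<noteq> 0"
    hence "int r * 1 \<le> int r * \<bar>k\<bar>" by (intro mult_left_mono) auto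
    hence "int r \<le> \<bar>x - y\<bar>" using k by (simp add: abs_mult)
    with lt show False by simp
  qed
  thus ?thesis using k by simp
qed

context
  fixes r :: nat
  assumes r: "prime r" "r > 2"
begin

lemma chi_euler: "[chi r a = int a ^ ((r - 1) div 2)] (mod int r)"
  using euler_criterion[of r "int a"] r by (simp add: chi_def)

lemma chi_mult: "chi r (a * b) = chi r a * chi r b"
proof (rule small_cong_eq[OF chi_vals _ r(2)])
  show "chi r a * chi r b \<in> {-1,0,1}" using chi_vals[of r a] chi_vals[of r b] by auto
  have e2: "[chi r a * chi r b = int a ^ ((r - 1) div 2) * int b ^ ((r - 1) div 2)] (mod int r)"
    by (intro cong_mult chi_euler)
  have e1: "[chi r (a*b) = int a ^ ((r - 1) div 2) * int b ^ ((r - 1) div 2)] (mod int r)"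
    using chi_euler[of "a*b"] by (simp add: power_mult_distrib)
  show "[chi r (a * b) = chi r a * chi r b] (mod int r)"
    by (rule cong_trans[OF e1 cong_sym[OF e2]])
qed

lemma chi_1: "chi r 1 = 1"
proof -
  have "\<not> [1 = 0] (mod int r)" using r by (auto simp: cong_def)
  moreover have "QuadRes (int r) 1" unfolding QuadRes_def by (rule exI[of _ 1]) simp
  ultimately show ?thesis by (simp add: chi_def Legendre_def)
qed

lemma chi_pow: "chi r (a ^ n) = chi r a ^ n"
proof (induction n)
  case 0 show ?case by (simp only: power_0 chi_1)
next
  case (Suc n) thus ?case by (simp only: power_Suc chi_mult)
qed

lemma chi_primroot: assumes "residue_primroot r g" shows "chi r g = -1"
proof -
  have cop: "coprime r g" and ord: "ord r g = r - 1"
    using assms r by (auto simp: residue_primroot_def totient_prime)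
  have "\<not> r dvd g" 
  proof
    assume "r dvd g"
    hence "is_unit r" using coprime_common_divisor[OF cop dvd_refl] by blast
    thus False using r by simp
  qed
  hence ne0: "chi r g \<noteq> 0" by (simp add: chi_0_iff)
  have "chi r g \<noteq> 1"
  proof
    assume "chi r g = 1"
    hence "[1 = int g ^ ((r - 1) div 2)] (mod int r)" using chi_euler[of g] by simp
    hence "[int (g ^ ((r - 1) div 2)) = int 1] (mod int r)" by (simp add: cong_sym_eq)
    hence "[g ^ ((r - 1) div 2) = 1] (mod r)" by (simp only: cong_int_iff)
    hence "r - 1 dvd (r - 1) div 2" using ord_divides[of g "(r-1) div 2" r] ord by simp
    moreover have "0 < (r - 1) div 2" "(r-1) div 2 < r - 1" using r by auto
    ultimately show False by (meson nat_dvd_not_less)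
  qed
  then show ?thesis using ne0 chi_vals[of r g] by simp
qed

lemma chi_minus1: "chi r (r - 1) = (-1) ^ ((r - 1) div 2)"
proof (rule small_cong_eq[OF chi_vals _ r(2)])
  show "(-1::int) ^ ((r - 1) div 2) \<in> {-1,0,1}" by (cases "even ((r - 1) div 2)") auto
  have "[int (r - 1) = -1] (mod int r)" using r by (simp add: cong_iff_dvd_diff of_nat_diff)
  hence "[int (r - 1) ^ ((r - 1) div 2) = (-1) ^ ((r - 1) div 2)] (mod int r)" by (rule cong_pow)
  then show "[chi r (r - 1) = (-1) ^ ((r - 1) div 2)] (mod int r)"
    by (rule cong_trans[OF chi_euler[of "r - 1"]])
qed

end

lemma reindex_mult_mod:
  fixes H :: "nat \<Rightarrow> 'a::comm_monoid_add"
  assumes "coprime u r" "r > 0"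
  shows "(\<Sum>a<r. H (u * a mod r)) = (\<Sum>a<r. H a)"
proof -
  let ?f = "\<lambda>a. u * a mod r"
  have inj: "inj_on ?f {..<r}"
  proof
    fix a b assume "a \<in> {..<r}" "b \<in> {..<r}" "?f a = ?f b"
    hence "[u * a = u * b] (mod r)" by (simp add: cong_def)
    hence "[a = b] (mod r)" using assms(1) by (simp add: cong_mult_lcancel_nat coprime_commute)
    thus "a = b" using \<open>a \<in> {..<r}\<close> \<open>b \<in> {..<r}\<close> by (simp add: cong_less_modulus_unique_nat)
  qed
  have sub: "?f ` {..<r} \<subseteq> {..<r}" using assms(2) by auto
  have "card (?f ` {..<r}) = card {..<r}" using inj by (rule card_image)
  hence img: "?f ` {..<r} = {..<r}" using sub by (simp add: card_subset_eq)
  have "(\<Sum>a<r. H a) = (\<Sum>a\<in>?f ` {..<r}. H a)" by (simp only: img)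
  also have "\<dots> = (\<Sum>a<r. H (?f a))" using inj by (simp add: sum.reindex)
  finally show ?thesis by simp
qed

lemma coprime_not_dvd: assumes "coprime u (r::nat)" "r > 1" shows "\<not> r dvd u"
proof
  assume "r dvd u"
  hence "is_unit r" using coprime_common_divisor[OF assms(1) \<open>r dvd u\<close> dvd_refl] by blast
  thus False using assms(2) by simp
qed

definition gsum :: "nat \<Rightarrow> complex" where
  "gsum r = (\<Sum>a<r. of_int (chi r a) * unit_root r a)"

definition tsum :: "nat \<Rightarrow> complex" where
  "tsum r = (\<Sum>a<r. of_int ((chi r a)^2) * unit_root r a)"

context
  fixes r g :: nat
  assumes r: "prime r" "r > 2" and g: "residue_primroot r g"
begin

lemma r_pos: "r > 0" using r by simp

lemma chi_sq_coprime: "coprime u r \<Longrightarrow> (chi r u)^2 = 1"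
  using coprime_not_dvd[of u r] r by (simp add: chi_sq)

lemma twist_gsum: assumes "coprime u r"
  shows "(\<Sum>a<r. of_int (chi r a) * unit_root r (u * a)) = of_int (chi r u) * gsum r"
proof -
  have "gsum r = (\<Sum>a<r. of_int (chi r (u * a mod r)) * unit_root r (u * a mod r))"
    unfolding gsum_def by (rule reindex_mult_mod[OF assms r_pos, symmetric])
  also have "\<dots> = (\<Sum>a<r. of_int (chi r u) * (of_int (chi r a) * unit_root r (u * a)))"
    by (simp add: chi_mod ur_mod[OF r_pos] chi_mult[OF r] mult.assoc)
  also have "\<dots> = of_int (chi r u) * (\<Sum>a<r. of_int (chi r a) * unit_root r (u * a))"
    by (simp add: sum_distrib_left)
  finally have "of_int (chi r u) * gsum r = of_int ((chi r u)^2) * (\<Sum>a<r. of_int (chi r a) * unit_root r (u * a))"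
    by (simp add: power2_eq_square)
  thus ?thesis using chi_sq_coprime[OF assms] by simp
qed

lemma twist_tsum: assumes "coprime u r"
  shows "(\<Sum>a<r. of_int ((chi r a)^2) * unit_root r (u * a)) = tsum r"
proof -
  have "tsum r = (\<Sum>a<r. of_int ((chi r (u * a mod r))^2) * unit_root r (u * a mod r))"
    unfolding tsum_def by (rule reindex_mult_mod[OF assms r_pos, symmetric])
  also have "\<dots> = (\<Sum>a<r. of_int ((chi r u)^2) * (of_int ((chi r a)^2) * unit_root r (u * a)))"
    by (simp add: chi_mod ur_mod[OF r_pos] chi_mult[OF r] power_mult_distrib mult.assoc)
  also have "\<dots> = (\<Sum>a<r. of_int ((chi r a)^2) * unit_root r (u * a))"
    using chi_sq_coprime[OF assms] by simp
  finally show ?thesis by simp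
qed

lemma tsum_val: "tsum r = -1"
proof -
  have "tsum r = (\<Sum>a<r. unit_root r (a * 1) - (if a = 0 then 1 else 0))"
    unfolding tsum_def
  proof (rule sum.cong[OF refl])
    fix a assume "a \<in> {..<r}"
    hence "r dvd a \<longleftrightarrow> a = 0" by auto
    thus "of_int ((chi r a)^2) * unit_root r a = unit_root r (a * 1) - (if a = 0 then 1 else 0)"
      by (auto simp: chi_sq unit_root_def)
  qed
  also have "\<dots> = (\<Sum>a<r. unit_root r (a * 1)) - (\<Sum>a<r. (if a = 0 then 1 else 0))"
    by (rule sum_subtractf)
  also have "\<dots> = -1" using r ur_sum[OF r_pos, of 1] r_pos by simp
  finally show ?thesis .
qed

lemma chi_sum0: "(\<Sum>a<r. chi r a) = 0"
proof -
  have cop: "coprime g r" using g by (simp add: residue_primroot_def coprime_commute)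
  have "(\<Sum>a<r. chi r a) = (\<Sum>a<r. chi r (g * a mod r))"
    by (rule reindex_mult_mod[OF cop r_pos, symmetric])
  also have "\<dots> = (\<Sum>a<r. - chi r a)" by (simp add: chi_mod chi_mult[OF r] chi_primroot[OF r g])
  finally show ?thesis by (simp add: sum_negf)
qed

lemma sq_sum_gen: "(\<Sum>a<r. of_int ((chi r a)^2) * unit_root r (a * m)) = (if r dvd m then of_nat r else 0) - 1"
proof -
  have "(\<Sum>a<r. of_int ((chi r a)^2) * unit_root r (a * m)) = (\<Sum>a<r. unit_root r (a * m) - (if a = 0 then 1 else 0))"
  proof (rule sum.cong[OF refl])
    fix a assume "a \<in> {..<r}"
    hence "r dvd a \<longleftrightarrow> a = 0" by auto
    thus "of_int ((chi r a)^2) * unit_root r (a * m) = unit_root r (a * m) - (if a = 0 then 1 else 0)"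
      by (auto simp: chi_sq unit_root_def)
  qed
  also have "\<dots> = (\<Sum>a<r. unit_root r (a * m)) - (\<Sum>a<r. (if a = 0 then 1 else 0))"
    by (rule sum_subtractf)
  also have "\<dots> = (if r dvd m then of_nat r else 0) - 1" using ur_sum[OF r_pos, of m] r_pos by simp
  finally show ?thesis .
qed

lemma gsum_sq: "(gsum r)^2 = of_int (chi r (r - 1)) * of_nat r"
proof -
  have inner: "(\<Sum>b<r. of_int (chi r a) * of_int (chi r b) * unit_root r (a + b))
      = (\<Sum>t<r. of_int ((chi r a)^2) * of_int (chi r t) * unit_root r (a * (1 + t)))" if a: "a < r" for a
  proof (cases "a = 0")
    case True
    hence "chi r a = 0" by (simp add: chi_0_iff)
    thus ?thesis by simp
  next
    case False
    hence "\<not> r dvd a" using a by auto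
    hence cop: "coprime a r" using prime_imp_coprime[OF r(1)] by (simp add: coprime_commute)
    have "(\<Sum>b<r. of_int (chi r a) * of_int (chi r b) * unit_root r (a + b))
        = (\<Sum>t<r. of_int (chi r a) * of_int (chi r (a * t mod r)) * unit_root r (a + a * t mod r))"
      by (rule reindex_mult_mod[OF cop r_pos, symmetric])
    also have "\<dots> = (\<Sum>t<r. of_int ((chi r a)^2) * of_int (chi r t) * unit_root r (a * (1 + t)))"
    proof (rule sum.cong[OF refl])
      fix t
      have "unit_root r (a + a * t mod r) = unit_root r (a * (1 + t))"
        using ur_add[of r a "a * t mod r"] ur_add[of r a "a * t"] ur_mod[OF r_pos, of "a * t"]
        by (simp add: distrib_left)
      thus "of_int (chi r a) * of_int (chi r (a * t mod r)) * unit_root r (a + a * t mod r)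
          = of_int ((chi r a)^2) * of_int (chi r t) * unit_root r (a * (1 + t))"
        by (simp add: chi_mod chi_mult[OF r] power2_eq_square)
    qed
    finally show ?thesis .
  qed
  have "(gsum r)^2 = (\<Sum>a<r. \<Sum>b<r. of_int (chi r a) * of_int (chi r b) * unit_root r (a + b))"
    unfolding gsum_def power2_eq_square sum_product
    by (simp add: ur_add mult_ac)
  also have "\<dots> = (\<Sum>a<r. \<Sum>t<r. of_int ((chi r a)^2) * of_int (chi r t) * unit_root r (a * (1 + t)))"
    by (rule sum.cong[OF refl]) (simp add: inner)
  also have "\<dots> = (\<Sum>t<r. of_int (chi r t) * (\<Sum>a<r. of_int ((chi r a)^2) * unit_root r (a * (1 + t))))"
    by (subst sum.swap) (simp add: sum_distrib_left mult_ac)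
  also have "\<dots> = (\<Sum>t<r. of_int (chi r t) * ((if t = r - 1 then of_nat r else 0) - 1))"
  proof (rule sum.cong[OF refl])
    fix t assume "t \<in> {..<r}"
    hence tr: "t < r" by simp
    have dvdiff: "r dvd (1 + t) \<longleftrightarrow> t = r - 1"
    proof
      assume "r dvd (1 + t)"
      hence "r \<le> 1 + t" by (rule dvd_imp_le) simp
      thus "t = r - 1" using tr by simp
    next
      assume "t = r - 1" thus "r dvd (1 + t)" using r_pos by simp
    qed
    thus "of_int (chi r t) * (\<Sum>a<r. of_int ((chi r a)^2) * unit_root r (a * (1 + t)))
        = of_int (chi r t) * ((if t = r - 1 then of_nat r else 0) - 1)"
      by (simp only: sq_sum_gen dvdiff)
  qed
  also have "\<dots> = (\<Sum>t<r. (if t = r - 1 then of_int (chi r t) * of_nat r else 0)) - (\<Sum>t<r. of_int (chi r t))"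
  proof -
    have "(\<Sum>t<r. of_int (chi r t) * ((if t = r - 1 then of_nat r else 0) - 1))
       = (\<Sum>t<r. (if t = r - 1 then of_int (chi r t) * of_nat r else 0) - of_int (chi r t))"
      by (rule sum.cong[OF refl]) (simp add: algebra_simps)
    also have "\<dots> = (\<Sum>t<r. (if t = r - 1 then of_int (chi r t) * of_nat r else 0)) - (\<Sum>t<r. of_int (chi r t))"
      by (rule sum_subtractf)
    finally show ?thesis .
  qed
  also have "\<dots> = of_int (chi r (r - 1)) * of_nat r - of_int (\<Sum>t<r. chi r t)"
    using r_pos by (simp add: sum.delta')
  also have "\<dots> = of_int (chi r (r - 1)) * of_nat r" by (simp add: chi_sum0)
  finally show ?thesis .
qed

end

context
  fixes r g :: nat
  assumes r: "prime r" "r > 2" and g: "residue_primroot r g"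
begin

lemma chi_gpow: "chi r (g ^ n) = (-1) ^ n"
  by (simp add: chi_pow[OF r] chi_primroot[OF r g])

lemma cyc_D_char: assumes "j \<le> 1"
  shows "cyc_D r g j = {k \<in> {..<r}. chi r k = (-1) ^ j}"
proof
  show "cyc_D r g j \<subseteq> {k \<in> {..<r}. chi r k = (-1) ^ j}"
  proof
    fix k assume "k \<in> cyc_D r g j"
    then obtain t where k: "k = g ^ (2 * t + j) mod r" unfolding cyc_D_def by blast
    have "k < r" using k r by simp
    moreover have "chi r k = (-1) ^ j"
    proof -
      have "chi r k = chi r (g ^ (2 * t + j))" unfolding k by (rule chi_mod)
      also have "\<dots> = (-1) ^ (2 * t + j)" by (rule chi_gpow)
      also have "\<dots> = (-1) ^ j" by (simp add: power_add)
      finally show ?thesis .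
    qed
    ultimately show "k \<in> {k \<in> {..<r}. chi r k = (-1) ^ j}" by simp
  qed
next
  show "{k \<in> {..<r}. chi r k = (-1) ^ j} \<subseteq> cyc_D r g j"
  proof
    fix k assume "k \<in> {k \<in> {..<r}. chi r k = (-1) ^ j}"
    hence kr: "k < r" and ck: "chi r k = (-1) ^ j" by auto
    have "chi r k \<noteq> 0" using ck by simp
    hence "\<not> r dvd k" by (simp add: chi_0_iff)
    hence "k \<noteq> 0" "coprime k r" using prime_imp_coprime[OF r(1)] by (auto simp: coprime_commute intro!: Nat.gr0I)
    hence "k \<in> totatives r" using kr by (simp add: totatives_def)
    moreover have "bij_betw (\<lambda>i. g ^ i mod r) {..<totient r} (totatives r)"
      using r g by (intro residue_primroot_is_generator) auto
    ultimately obtain i where i: "i < totient r" "k = g ^ i mod r"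
      unfolding bij_betw_def by auto
    have ir: "i < r - 1" using i r by (simp add: totient_prime)
    have "(-1::int) ^ i = (-1) ^ j" using ck i by (simp add: chi_mod chi_gpow)
    hence par: "even i \<longleftrightarrow> even j" by (simp add: minus_one_power_iff split: if_splits)
    have i_eq: "i = 2 * (i div 2) + j"
    proof (cases "j = 0")
      case True then show ?thesis using par by simp
    next
      case False then have "j = 1" using assms by simp
      then show ?thesis using par by presburger
    qed
    have "odd r" using r by (simp add: prime_odd_nat)
    hence "i div 2 < (r - 1) div 2" using ir i_eq assms by (cases "j = 0"; auto; presburger)
    thus "k \<in> cyc_D r g j" unfolding cyc_D_def using i(2) i_eq by (intro CollectI exI[of _ "i div 2"]) simp
  qed
qed

lemma sum_filter_if: "(\<Sum>k\<in>{k. k < r \<and> P k}. f k) = (\<Sum>k<r. if P k then f k else 0)"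
  using sum.inter_filter[of "{..<r}" f P] by simp

lemma delta_sum: "gauss_delta r g 0 + gauss_delta r g 1 = tsum r"
proof -
  have "gauss_delta r g 0 + gauss_delta r g 1
     = (\<Sum>k<r. if chi r k = 1 then unit_root r k else 0) + (\<Sum>k<r. if chi r k = -1 then unit_root r k else 0)"
    unfolding gauss_delta_def using cyc_D_char[of 0] cyc_D_char[of 1] by (simp add: sum_filter_if)
  also have "\<dots> = tsum r" unfolding tsum_def sum.distrib[symmetric]
  proof (rule sum.cong[OF refl])
    fix k show "(if chi r k = 1 then unit_root r k else 0) + (if chi r k = - 1 then unit_root r k else 0)
      = of_int ((chi r k)^2) * unit_root r k" using chi_vals[of r k] by auto
  qed
  finally show ?thesis .
qed

lemma delta_diff: "gauss_delta r g 0 - gauss_delta r g 1 = gsum r"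
proof -
  have "gauss_delta r g 0 - gauss_delta r g 1
     = (\<Sum>k<r. if chi r k = 1 then unit_root r k else 0) - (\<Sum>k<r. if chi r k = -1 then unit_root r k else 0)"
    unfolding gauss_delta_def using cyc_D_char[of 0] cyc_D_char[of 1] by (simp add: sum_filter_if)
  also have "\<dots> = gsum r" unfolding gsum_def sum_subtractf[symmetric]
  proof (rule sum.cong[OF refl])
    fix k show "(if chi r k = 1 then unit_root r k else 0) - (if chi r k = - 1 then unit_root r k else 0)
      = of_int (chi r k) * unit_root r k" using chi_vals[of r k] by auto
  qed
  finally show ?thesis .
qed

end

lemma crt_sum:
  fixes F H :: "nat \<Rightarrow> complex" and p q u v :: nat
  assumes pq: "coprime p q" "p > 0" "q > 0"
    and u: "[u * q = 1] (mod p)" and v: "[v * p = 1] (mod q)"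
  shows "(\<Sum>k<p*q. F (k mod p) * H (k mod q) * unit_root (p*q) k)
       = (\<Sum>a<p. F a * unit_root p (u * a)) * (\<Sum>b<q. H b * unit_root q (v * b))"
proof -
  define c where "c = (\<lambda>(a, b). (u * q * a + v * p * b) mod (p * q))"
  have cp: "c (a, b) mod p = a" if "a < p" for a b
  proof -
    have "[u * q * a + v * p * b = 1 * a + 0] (mod p)"
      by (intro cong_add cong_mult[OF u cong_refl]) (simp add: cong_0_iff)
    hence "[c (a, b) = a] (mod p)" unfolding c_def by (simp add: mod_mod_cancel cong_def mod_mult_cong_right)
    thus ?thesis using that by (simp add: cong_def)
  qed
  have cq: "c (a, b) mod q = b" if "b < q" for a b
  proof -
    have "[u * q * a + v * p * b = 0 + 1 * b] (mod q)"
      by (intro cong_add cong_mult[OF v cong_refl]) (simp add: cong_0_iff)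
    hence "[c (a, b) = b] (mod q)" unfolding c_def by (simp add: cong_def mod_mod_cancel[of q "p*q"])
    thus ?thesis using that by (simp add: cong_def)
  qed
  have inj: "inj_on c ({..<p} \<times> {..<q})"
  proof
    fix x y assume x: "x \<in> {..<p} \<times> {..<q}" and y: "y \<in> {..<p} \<times> {..<q}" and e: "c x = c y"
    obtain a b where xab: "x = (a, b)" by (cases x)
    obtain a' b' where yab: "y = (a', b')" by (cases y)
    have "a = a'" using cp[of a b] cp[of a' b'] x y e xab yab by auto
    moreover have "b = b'" using cq[of b a] cq[of b' a'] x y e xab yab by auto
    ultimately show "x = y" using xab yab by simp
  qed
  have sub: "c ` ({..<p} \<times> {..<q}) \<subseteq> {..<p*q}" using pq unfolding c_def by auto
  have "card (c ` ({..<p} \<times> {..<q})) = p * q" using inj by (simp add: card_image card_cartesian_product)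
  hence img: "c ` ({..<p} \<times> {..<q}) = {..<p*q}" using sub by (simp add: card_subset_eq)
  have "(\<Sum>k<p*q. F (k mod p) * H (k mod q) * unit_root (p*q) k)
      = (\<Sum>x\<in>{..<p} \<times> {..<q}. F (c x mod p) * H (c x mod q) * unit_root (p*q) (c x))"
    by (subst img[symmetric], subst sum.reindex[OF inj]) simp
  also have "\<dots> = (\<Sum>x\<in>{..<p} \<times> {..<q}. (F (fst x) * unit_root p (u * fst x)) * (H (snd x) * unit_root q (v * snd x)))"
  proof (rule sum.cong[OF refl])
    fix x assume x: "x \<in> {..<p} \<times> {..<q}"
    obtain a b where xab: "x = (a, b)" by (cases x)
    have "unit_root (p*q) (c x) = unit_root (p*q) (u * q * a + v * p * b)"
      unfolding c_def xab using pq by (simp add: ur_mod)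
    also have "\<dots> = unit_root (p*q) (q * (u * a)) * unit_root (p*q) (p * (v * b))"
      by (simp add: ur_add[symmetric] mult_ac)
    also have "\<dots> = unit_root p (u * a) * unit_root q (v * b)"
      using ur_scale[of q p "u * a"] ur_scale[of p q "v * b"] pq by (simp add: mult.commute)
    finally have "unit_root (p*q) (c x) = unit_root p (u * a) * unit_root q (v * b)" .
    thus "F (c x mod p) * H (c x mod q) * unit_root (p*q) (c x)
        = (F (fst x) * unit_root p (u * fst x)) * (H (snd x) * unit_root q (v * snd x))"
      using cp[of a b] cq[of b a] x xab by (simp add: mult_ac)
  qed
  also have "\<dots> = (\<Sum>a<p. F a * unit_root p (u * a)) * (\<Sum>b<q. H b * unit_root q (v * b))"
    by (simp add: sum_product sum.cartesian_product split_beta)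
  finally show ?thesis .
qed


definition wS :: "nat \<Rightarrow> nat \<Rightarrow> nat \<Rightarrow> nat set" where
  "wS p q i = {k. k < p * q \<and> chi p k * chi q k = (-1) ^ i}"

context
  fixes p q g :: nat
  assumes hp: "prime p" and hq: "prime q" and pq: "p \<noteq> q" and p2: "p > 2" and q2: "q > 2"
    and gcd2: "gcd (p - 1) (q - 1) = 2"
    and gp: "residue_primroot p g" and gq: "residue_primroot q g"
begin

lemma cop_pq: "coprime p q" using hp hq pq by (simp add: primes_coprime)

lemma x_props: "wh_x p q g < p * q \<and> [wh_x p q g = g] (mod p) \<and> [wh_x p q g = 1] (mod q)"
proof -
  let ?P = "\<lambda>x. x < p * q \<and> [x = g] (mod p) \<and> [x = 1] (mod q)"
  obtain y where y: "[y = g] (mod p)" "[y = 1] (mod q)"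
    using binary_chinese_remainder_nat[OF cop_pq] by blast
  have "?P (y mod (p * q))"
  proof (intro conjI)
    show "y mod (p * q) < p * q" using p2 q2 by simp
    show "[y mod (p * q) = g] (mod p)" using y(1) by (simp add: cong_def mod_mod_cancel[of p "p*q"])
    show "[y mod (p * q) = 1] (mod q)" using y(2) by (simp add: cong_def mod_mod_cancel[of q "p*q"])
  qed
  moreover have "x1 = x2" if "?P x1" "?P x2" for x1 x2
  proof -
    have "[x1 = x2] (mod p)" using that by (meson cong_sym cong_trans)
    moreover have "[x1 = x2] (mod q)" using that by (meson cong_sym cong_trans)
    ultimately have "[x1 = x2] (mod p * q)" using cop_pq by (rule coprime_cong_mult_nat)
    thus ?thesis using that by (simp add: cong_less_modulus_unique_nat)
  qed
  ultimately have "\<exists>!x. ?P x" by blast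
  from theI'[OF this] show ?thesis unfolding wh_x_def .
qed

abbreviation "xx \<equiv> wh_x p q g"

lemma chi_p_x: "chi p xx = -1"
  using chi_cong[of xx g p] x_props chi_primroot[OF hp p2 gp] by simp

lemma chi_q_x: "chi q xx = 1"
  using chi_cong[of xx 1 q] x_props chi_1[OF hq q2] by simp

lemma chi_p_g: "chi p g = -1" using chi_primroot[OF hp p2 gp] .
lemma chi_q_g: "chi q g = -1" using chi_primroot[OF hq q2 gq] .

lemma cop_g: "coprime g (p * q)"
  using gp gq by (simp add: residue_primroot_def coprime_commute)

lemma cop_x: "coprime xx (p * q)"
proof -
  have "coprime g p" using cop_g by simp
  hence "coprime xx p" using cong_imp_coprime[of g xx p] x_props by (simp add: cong_sym)
  moreover have "coprime xx q" using cong_imp_coprime[of 1 xx q] x_props by (simp add: cong_sym)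
  ultimately show ?thesis by simp
qed

lemma chi_elem: "chi p (g ^ s * xx ^ i mod (p * q)) * chi q (g ^ s * xx ^ i mod (p * q)) = (-1) ^ i"
proof -
  have "chi p (g ^ s * xx ^ i mod (p * q)) = chi p (g ^ s * xx ^ i)"
    by (rule chi_cong) (simp add: cong_def mod_mod_cancel[of p "p*q"])
  moreover have "chi q (g ^ s * xx ^ i mod (p * q)) = chi q (g ^ s * xx ^ i)"
    by (rule chi_cong) (simp add: cong_def mod_mod_cancel[of q "p*q"])
  ultimately show ?thesis
    by (simp add: chi_mult[OF hp p2] chi_mult[OF hq q2] chi_pow[OF hp p2] chi_pow[OF hq q2]
        chi_p_x chi_q_x chi_p_g chi_q_g power_mult_distrib[symmetric] mult_ac)
qed

lemma lcm_eq: "lcm (p - 1) (q - 1) = wh_e p q"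
proof -
  have "(p - 1) * (q - 1) = gcd (p - 1) (q - 1) * lcm (p - 1) (q - 1)" by (rule prod_gcd_lcm_nat)
  also have "\<dots> = 2 * lcm (p - 1) (q - 1)" by (simp only: gcd2)
  finally have h: "(p - 1) * (q - 1) = 2 * lcm (p - 1) (q - 1)" .
  show ?thesis unfolding wh_e_def h by simp
qed

lemma g_pow_not1: assumes "0 < d" "d < wh_e p q" shows "\<not> [g ^ d = 1] (mod p * q)"
proof
  assume h: "[g ^ d = 1] (mod p * q)"
  have "[g ^ d = 1] (mod p)" using h by (rule cong_modulus_mult_nat)
  hence "ord p g dvd d" using ord_divides[of g d p] by blast
  moreover have "ord p g = p - 1" using gp hp by (simp add: residue_primroot_def totient_prime)
  ultimately have d1: "p - 1 dvd d" by simp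
  have "[g ^ d = 1] (mod q * p)" using h by (simp add: mult.commute)
  hence "[g ^ d = 1] (mod q)" by (rule cong_modulus_mult_nat)
  hence "ord q g dvd d" using ord_divides[of g d q] by blast
  moreover have "ord q g = q - 1" using gq hq by (simp add: residue_primroot_def totient_prime)
  ultimately have "q - 1 dvd d" by simp
  with d1 have "lcm (p - 1) (q - 1) dvd d" by simp
  hence "wh_e p q dvd d" by (simp only: lcm_eq)
  thus False using assms by (simp add: nat_dvd_not_less)
qed

end

context
  fixes p q g :: nat
  assumes hp: "prime p" and hq: "prime q" and pq: "p \<noteq> q" and p2: "p > 2" and q2: "q > 2"
    and gcd2: "gcd (p - 1) (q - 1) = 2"
    and gp: "residue_primroot p g" and gq: "residue_primroot q g"
begin

abbreviation "xg \<equiv> wh_x p q g"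

lemmas facts = hp hq pq p2 q2 gcd2 gp gq

lemma not_cong_pow: assumes "s1 < s2" "s2 < wh_e p q"
  shows "\<not> [g ^ s1 * xg ^ i = g ^ s2 * xg ^ i] (mod p * q)"
proof
  assume h: "[g ^ s1 * xg ^ i = g ^ s2 * xg ^ i] (mod p * q)"
  have cx: "coprime (xg ^ i) (p * q)" using cop_x[OF facts] by simp
  have cg: "coprime (g ^ s1) (p * q)" using cop_g[OF facts] by simp
  from h have "[g ^ s1 = g ^ s2] (mod p * q)" using cx by (simp add: cong_mult_rcancel_nat)
  moreover have "g ^ s2 = g ^ s1 * g ^ (s2 - s1)" using assms(1) by (simp add: power_add[symmetric])
  ultimately have "[g ^ s1 * 1 = g ^ s1 * g ^ (s2 - s1)] (mod p * q)" by simp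
  hence "[1 = g ^ (s2 - s1)] (mod p * q)" using cg by (simp only: cong_mult_lcancel_nat)
  hence "[g ^ (s2 - s1) = 1] (mod p * q)" by (rule cong_sym)
  moreover have "0 < s2 - s1" "s2 - s1 < wh_e p q" using assms by auto
  ultimately show False using g_pow_not1[OF facts] by blast
qed

lemma D_inj: "inj_on (\<lambda>s. g ^ s * xg ^ i mod (p * q)) {..<wh_e p q}"
proof
  fix s1 s2 assume s: "s1 \<in> {..<wh_e p q}" "s2 \<in> {..<wh_e p q}"
    and e: "g ^ s1 * xg ^ i mod (p * q) = g ^ s2 * xg ^ i mod (p * q)"
  hence c: "[g ^ s1 * xg ^ i = g ^ s2 * xg ^ i] (mod p * q)" by (simp add: cong_def)
  show "s1 = s2"
  proof (rule ccontr)
    assume "s1 \<noteq> s2"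
    hence "s1 < s2 \<or> s2 < s1" by auto
    thus False
    proof
      assume "s1 < s2" thus False using not_cong_pow[of s1 s2 i] c s by simp
    next
      assume "s2 < s1" thus False using not_cong_pow[of s2 s1 i] c s by (simp add: cong_sym_eq)
    qed
  qed
qed

lemma D_image: "wh_D p q g i = (\<lambda>s. g ^ s * xg ^ i mod (p * q)) ` {..<wh_e p q}"
  unfolding wh_D_def by auto

lemma D_card: "card (wh_D p q g i) = wh_e p q"
  unfolding D_image by (simp add: card_image[OF D_inj])

lemma D_sub: "wh_D p q g i \<subseteq> wS p q i"
proof
  fix k assume "k \<in> wh_D p q g i"
  then obtain s where k: "k = g ^ s * xg ^ i mod (p * q)" unfolding wh_D_def by blast
  have "k < p * q" using k p2 q2 by simp
  thus "k \<in> wS p q i" unfolding wS_def using chi_elem[OF facts, of s i] k by simp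
qed

lemma prime_cop_iff: "prime (r::nat) \<Longrightarrow> coprime k r \<longleftrightarrow> \<not> r dvd k"
  using prime_imp_coprime[of r k] coprime_not_dvd[of k r] by (auto simp: coprime_commute prime_gt_1_nat)

lemma S_union: "wS p q 0 \<union> wS p q 1 = {k. k < p * q \<and> coprime k (p * q)}"
proof -
  have "chi p k * chi q k = 1 \<or> chi p k * chi q k = -1 \<longleftrightarrow> \<not> p dvd k \<and> \<not> q dvd k" for k
    using chi_vals[of p k] chi_vals[of q k] chi_0_iff[of p k] chi_0_iff[of q k] by auto
  thus ?thesis unfolding wS_def using prime_cop_iff[OF hp] prime_cop_iff[OF hq] by auto
qed

lemma S_disj: "wS p q 0 \<inter> wS p q 1 = {}"
  unfolding wS_def by auto

lemma units_card: "card {k. k < p * q \<and> coprime k (p * q)} = 2 * wh_e p q"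
proof -
  have pq1: "p * q > 1" using p2 q2 by (simp add: one_less_mult)
  have "{k. k < p * q \<and> coprime k (p * q)} = totatives (p * q)"
  proof
    show "{k. k < p * q \<and> coprime k (p * q)} \<subseteq> totatives (p * q)"
    proof
      fix k assume k: "k \<in> {k. k < p * q \<and> coprime k (p * q)}"
      have "k \<noteq> 0"
      proof
        assume "k = 0"
        hence "coprime 0 p" using k by simp
        hence "p = 1" by simp
        thus False using p2 by simp
      qed
      thus "k \<in> totatives (p * q)" using k by (auto simp: totatives_def)
    qed
    show "totatives (p * q) \<subseteq> {k. k < p * q \<and> coprime k (p * q)}"
    proof
      fix k assume k: "k \<in> totatives (p * q)"
      have "k \<noteq> p * q" using k pq1 by (auto simp: totatives_def)
      thus "k \<in> {k. k < p * q \<and> coprime k (p * q)}" using k by (auto simp: totatives_def)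
    qed
  qed
  hence "card {k. k < p * q \<and> coprime k (p * q)} = totient (p * q)" by (simp add: totient_def)
  also have "\<dots> = (p - 1) * (q - 1)"
    using totient_mult_coprime[OF cop_pq[OF facts]] hp hq by (simp add: totient_prime)
  also have "\<dots> = 2 * wh_e p q"
  proof -
    have "even (p - 1)" using hp p2 by (simp add: prime_odd_nat)
    hence "even ((p - 1) * (q - 1))" by simp
    thus ?thesis unfolding wh_e_def by simp
  qed
  finally show ?thesis .
qed

lemma D_eq_S: assumes "i \<le> 1" shows "wh_D p q g i = wS p q i"
proof -
  have fin: "finite (wS p q j)" for j unfolding wS_def by simp
  have "card (wS p q 0) + card (wS p q 1) = 2 * wh_e p q"
    using card_Un_disjoint[OF fin fin S_disj] S_union units_card by simp
  moreover have le: "wh_e p q \<le> card (wS p q j)" for j using card_mono[OF fin D_sub] D_card by simp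
  ultimately have c0: "card (wS p q 0) = wh_e p q" and c1: "card (wS p q 1) = wh_e p q"
    using le[of 0] le[of 1] by linarith+
  have "card (wS p q j) = wh_e p q" if "j \<le> 1" for j
  proof -
    have "j = 0 \<or> j = 1" using that by auto
    thus ?thesis using c0 c1 by auto
  qed
  thus ?thesis using card_subset_eq[OF fin D_sub] D_card assms by simp
qed

end

lemma sum_filter_if_gen: "(\<Sum>k\<in>{k. k < (n::nat) \<and> P k}. f k) = (\<Sum>k<n. if P k then f k else 0)"
  using sum.inter_filter[of "{..<n}" f P] by simp

context
  fixes p q g :: nat
  assumes hp: "prime p" and hq: "prime q" and pq: "p \<noteq> q" and p2: "p > 2" and q2: "q > 2"
    and gcd2: "gcd (p - 1) (q - 1) = 2"
    and gp: "residue_primroot p g" and gq: "residue_primroot q g"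
begin

lemmas facts2 = hp hq pq p2 q2 gcd2 gp gq

lemma eta_filter: assumes "j \<le> 1"
  shows "gauss_eta p q g j = (\<Sum>k<p*q. if chi p k * chi q k = (-1)^j then unit_root (p*q) k else 0)"
  unfolding gauss_eta_def D_eq_S[OF facts2 assms] wS_def by (rule sum_filter_if_gen)

lemma eta_sum: "gauss_eta p q g 0 + gauss_eta p q g 1
   = (\<Sum>k<p*q. of_int ((chi p (k mod p))^2) * of_int ((chi q (k mod q))^2) * unit_root (p*q) k)"
  unfolding eta_filter[OF le0] eta_filter[OF le_refl] sum.distrib[symmetric]
proof (rule sum.cong[OF refl])
  fix k
  show "(if chi p k * chi q k = (-1)^0 then unit_root (p*q) k else 0) + (if chi p k * chi q k = (-1)^1 then unit_root (p*q) k else 0)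
      = of_int ((chi p (k mod p))^2) * of_int ((chi q (k mod q))^2) * unit_root (p*q) k"
    using chi_vals[of p k] chi_vals[of q k] by (auto simp: chi_mod)
qed

lemma eta_diff: "gauss_eta p q g 0 - gauss_eta p q g 1
   = (\<Sum>k<p*q. of_int (chi p (k mod p)) * of_int (chi q (k mod q)) * unit_root (p*q) k)"
  unfolding eta_filter[OF le0] eta_filter[OF le_refl] sum_subtractf[symmetric]
proof (rule sum.cong[OF refl])
  fix k
  show "(if chi p k * chi q k = (-1)^0 then unit_root (p*q) k else 0) - (if chi p k * chi q k = (-1)^1 then unit_root (p*q) k else 0)
      = of_int (chi p (k mod p)) * of_int (chi q (k mod q)) * unit_root (p*q) k"
    using chi_vals[of p k] chi_vals[of q k] by (auto simp: chi_mod)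
qed

lemma exists_inv: assumes "coprime a (m::nat)" shows "\<exists>u. [u * a = 1] (mod m) \<and> coprime u m"
proof -
  obtain u where u: "[a * u = Suc 0] (mod m)" using cong_solve_coprime_nat[OF assms] by blast
  have "coprime (a * u) m" using cong_imp_coprime[of 1 "a * u" m] u by (simp add: cong_sym)
  hence "coprime u m" by simp
  thus ?thesis using u by (intro exI[of _ u]) (simp add: mult.commute)
qed

lemma eta_results: "\<exists>c::int. c \<in> {1, -1} \<and> gauss_eta p q g 0 + gauss_eta p q g 1 = 1
   \<and> gauss_eta p q g 0 - gauss_eta p q g 1 = of_int c * gsum p * gsum q"
proof -
  have cpq: "coprime p q" by (rule cop_pq[OF facts2])
  obtain u where u: "[u * q = 1] (mod p)" "coprime u p"
    using exists_inv[of q p] cpq by (auto simp: coprime_commute)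
  obtain v where v: "[v * p = 1] (mod q)" "coprime v q"
    using exists_inv[of p q] cpq by auto
  have pos: "p > 0" "q > 0" using p2 q2 by auto
  have "gauss_eta p q g 0 + gauss_eta p q g 1
      = (\<Sum>a<p. of_int ((chi p a)^2) * unit_root p (u * a)) * (\<Sum>b<q. of_int ((chi q b)^2) * unit_root q (v * b))"
    unfolding eta_sum by (rule crt_sum[OF cpq pos u(1) v(1)])
  also have "\<dots> = tsum p * tsum q"
    by (simp only: twist_tsum[OF hp p2 gp u(2)] twist_tsum[OF hq q2 gq v(2)])
  also have "\<dots> = 1" by (simp add: tsum_val[OF hp p2 gp] tsum_val[OF hq q2 gq])
  finally have s: "gauss_eta p q g 0 + gauss_eta p q g 1 = 1" .
  have "gauss_eta p q g 0 - gauss_eta p q g 1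
      = (\<Sum>a<p. of_int (chi p a) * unit_root p (u * a)) * (\<Sum>b<q. of_int (chi q b) * unit_root q (v * b))"
    unfolding eta_diff by (rule crt_sum[OF cpq pos u(1) v(1)])
  also have "\<dots> = (of_int (chi p u) * gsum p) * (of_int (chi q v) * gsum q)"
    by (simp only: twist_gsum[OF hp p2 gp u(2)] twist_gsum[OF hq q2 gq v(2)])
  also have "\<dots> = of_int (chi p u * chi q v) * gsum p * gsum q" by (simp add: mult_ac)
  finally have d: "gauss_eta p q g 0 - gauss_eta p q g 1 = of_int (chi p u * chi q v) * gsum p * gsum q" .
  have "(chi p u)^2 = 1" "(chi q v)^2 = 1"
    using chi_sq_coprime[OF hp p2 gp u(2)] chi_sq_coprime[OF hq q2 gq v(2)] by auto
  hence "chi p u * chi q v \<in> {1, -1}"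
    using chi_vals[of p u] chi_vals[of q v] by (auto simp: power2_eq_square)
  thus ?thesis using s d by blast
qed

end

lemma final_alg:
  fixes A B a0 a1 b0 b1 Gp Gq c P Q :: complex
  assumes h: "A + B = 1" "A - B = c*Gp*Gq" "a0 + a1 = -1" "a0 - a1 = Gp" "b0 + b1 = -1" "b0 - b1 = Gq"
    "Gp^2 = P" "Gq^2 = -Q" "c^2 = 1"
  shows "A^2*(a1*b1 + a0*b0) + B^2*(a1*b0 + a0*b1) = (1 - P*Q)/4 + (-c)*(P*Q)/2"
proof -
  have half: "x = ((x + y) + (x - y)) / 2" "y = ((x + y) - (x - y)) / 2" for x y :: complex
    by (simp_all add: field_simps)
  have A: "A = (1 + c*Gp*Gq)/2"
  proof -
    have "A = ((A + B) + (A - B)) / 2" by (rule half(1))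
    also have "\<dots> = (1 + c*Gp*Gq)/2" by (simp only: h(1,2))
    finally show ?thesis .
  qed
  have B: "B = (1 - c*Gp*Gq)/2"
  proof -
    have "B = ((A + B) - (A - B)) / 2" by (rule half(2))
    also have "\<dots> = (1 - c*Gp*Gq)/2" by (simp only: h(1,2))
    finally show ?thesis .
  qed
  have a0: "a0 = (-1 + Gp)/2"
  proof -
    have "a0 = ((a0 + a1) + (a0 - a1)) / 2" by (rule half(1))
    also have "\<dots> = (-1 + Gp)/2" by (simp only: h(3,4))
    finally show ?thesis .
  qed
  have a1: "a1 = (-1 - Gp)/2"
  proof -
    have "a1 = ((a0 + a1) - (a0 - a1)) / 2" by (rule half(2))
    also have "\<dots> = (-1 - Gp)/2" by (simp only: h(3,4))
    finally show ?thesis .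
  qed
  have b0: "b0 = (-1 + Gq)/2"
  proof -
    have "b0 = ((b0 + b1) + (b0 - b1)) / 2" by (rule half(1))
    also have "\<dots> = (-1 + Gq)/2" by (simp only: h(5,6))
    finally show ?thesis .
  qed
  have b1: "b1 = (-1 - Gq)/2"
  proof -
    have "b1 = ((b0 + b1) - (b0 - b1)) / 2" by (rule half(2))
    also have "\<dots> = (-1 - Gq)/2" by (simp only: h(5,6))
    finally show ?thesis .
  qed
  have "A^2*(a1*b1 + a0*b0) + B^2*(a1*b0 + a0*b1) = (1 + c^2*Gp^2*Gq^2)/4 + c*Gp^2*Gq^2/2"
    unfolding A B a0 a1 b0 b1 by (simp add: field_simps power2_eq_square)
  also have "\<dots> = (1 - P*Q)/4 + (-c)*(P*Q)/2" using h(7-9) by simp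
  finally show ?thesis .
qed

theorem lemma2:
  fixes p q g :: nat
  assumes "prime p" and "prime q" and "p \<noteq> q" and "odd p" and "odd q"
    and "p mod 4 = 1" and "q mod 4 = 3"
    and "gcd (p - 1) (q - 1) = 2"
    and "residue_primroot p g" and "residue_primroot q g"
  shows "\<exists>\<epsilon>::int. \<epsilon> \<in> {1, -1} \<and>
    (gauss_eta p q g 0)\<^sup>2 * (gauss_delta p g 1 * gauss_delta q g 1 + gauss_delta p g 0 * gauss_delta q g 0)
    + (gauss_eta p q g 1)\<^sup>2 * (gauss_delta p g 1 * gauss_delta q g 0 + gauss_delta p g 0 * gauss_delta q g 1)
    = (1 - of_nat (p * q)) / 4 + of_int \<epsilon> * of_nat (p * q) / 2"
proof -
  note hp = assms(1) and hq = assms(2) and gp = assms(9) and gq = assms(10)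
  have p2: "p > 2"
  proof -
    have "p \<ge> 2" using hp by (rule prime_ge_2_nat)
    moreover have "p \<noteq> 2" using assms(4) by auto
    ultimately show ?thesis by simp
  qed
  have q2: "q > 2"
  proof -
    have "q \<ge> 2" using hq by (rule prime_ge_2_nat)
    moreover have "q \<noteq> 2" using assms(5) by auto
    ultimately show ?thesis by simp
  qed
  obtain c where c: "c \<in> {1, -1}" "gauss_eta p q g 0 + gauss_eta p q g 1 = 1"
    "gauss_eta p q g 0 - gauss_eta p q g 1 = of_int c * gsum p * gsum q"
    using eta_results[OF hp hq assms(3) p2 q2 assms(8) gp gq] by blast
  have dp1: "gauss_delta p g 0 + gauss_delta p g 1 = -1"
    using delta_sum[OF hp p2 gp] tsum_val[OF hp p2 gp] by simp
  have dp2: "gauss_delta p g 0 - gauss_delta p g 1 = gsum p" by (rule delta_diff[OF hp p2 gp])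
  have dq1: "gauss_delta q g 0 + gauss_delta q g 1 = -1"
    using delta_sum[OF hq q2 gq] tsum_val[OF hq q2 gq] by simp
  have dq2: "gauss_delta q g 0 - gauss_delta q g 1 = gsum q" by (rule delta_diff[OF hq q2 gq])
  have "even ((p - 1) div 2)" using assms(6) by presburger
  hence Gp: "(gsum p)^2 = of_nat p" using gsum_sq[OF hp p2 gp] chi_minus1[OF hp p2] by simp
  have "odd ((q - 1) div 2)" using assms(7) by presburger
  hence Gq: "(gsum q)^2 = - of_nat q" using gsum_sq[OF hq q2 gq] chi_minus1[OF hq q2] by simp
  have c2: "(of_int c :: complex)^2 = 1" using c(1) by auto
  have "(gauss_eta p q g 0)\<^sup>2 * (gauss_delta p g 1 * gauss_delta q g 1 + gauss_delta p g 0 * gauss_delta q g 0)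
    + (gauss_eta p q g 1)\<^sup>2 * (gauss_delta p g 1 * gauss_delta q g 0 + gauss_delta p g 0 * gauss_delta q g 1)
    = (1 - of_nat p * of_nat q) / 4 + (- of_int c) * (of_nat p * of_nat q) / 2"
    by (rule final_alg[OF c(2,3) dp1 dp2 dq1 dq2 Gp Gq c2])
  also have "\<dots> = (1 - of_nat (p * q)) / 4 + of_int (- c) * of_nat (p * q) / 2" by simp
  finally show ?thesis using c(1) by (intro exI[of _ "- c"]) auto
qed


end
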